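(* Let $\underline x<\overline x$ and $\underline y<\overline y$ be real numbers and $\alpha\in\mathbb{R}$. Then the convex hull of $$T_\alpha=\{(x,y)\in\mathbb{R}^2:\ xy=\alpha,\ x\in[\underline x,\overline x],\ y\in[\underline y,\overline y]\}$$ is second-order cone representable.
   Context: A set $S\subseteq\mathbb{R}^n$ is second-order cone representable if it is the projection onto the first $n$ coordinates of a set $\{(x,u)\in\mathbb{R}^n\times\mathbb{R}^m\}$ defined by finitely many linear equalities/inequalities and constraints of the form $\|A_k(x,u)+b_k\|_2\le c_k^T(x,u)+d_k$. *)

theory Defs
  imports "HOL-Analysis.Analysis"
begin

text \<open>An affine form in the variables (x,u), where x ranges over the ambient
euclidean space and u = (u_0,...,u_{m-1}) are m auxiliary real variables.\<close>

type_synonym 'a aff_form = "'a \<times> (nat \<Rightarrow> real) \<times> real"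

definition aff_eval :: "nat \<Rightarrow> ('a::real_inner) aff_form \<Rightarrow> 'a \<Rightarrow> (nat \<Rightarrow> real) \<Rightarrow> real" where
  "aff_eval m a x u = (case a of (c, d, e) \<Rightarrow> inner c x + (\<Sum>j<m. d j * u j) + e)"

text \<open>Second-order cone representability: S is the projection onto x of the set of
(x,u), u in R^m, satisfying finitely many linear equalities, linear inequalities
and second-order cone constraints  ||A_k(x,u) + b_k||_2 <= c_k^T (x,u) + d_k
(each row of A_k(x,u)+b_k being an affine form, listed in the first component).\<close>

definition soc_representable :: "('a::euclidean_space) set \<Rightarrow> bool" where
  "soc_representable S \<longleftrightarrow>
     (\<exists>(m::nat) (Eqs::'a aff_form list) (Ineqs::'a aff_form list)
        (Cones::('a aff_form list \<times> 'a aff_form) list).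
        S = {x. \<exists>u::nat \<Rightarrow> real.
               (\<forall>a\<in>set Eqs. aff_eval m a x u = 0) \<and>
               (\<forall>a\<in>set Ineqs. aff_eval m a x u \<le> 0) \<and>
               (\<forall>(A, c)\<in>set Cones.
                   sqrt (\<Sum>a\<leftarrow>A. (aff_eval m a x u)\<^sup>2) \<le> aff_eval m c x u)})"

end

theory Submission imports Defs begin

lemma sum_list_L2: "sqrt (\<Sum>a\<leftarrow>A. (h a)\<^sup>2) = L2_set (\<lambda>i. h (A!i)) {..<length A}"
  unfolding L2_set_def by (simp add: sum_list_sum_nth atLeast0LessThan)

lemma mink_list:
  assumes "0 \<le> s" "0 \<le> t"
  shows "sqrt (\<Sum>a\<leftarrow>A. (s * f a + t * g a)\<^sup>2) \<le> s * sqrt (\<Sum>a\<leftarrow>A. (f a)\<^sup>2) + t * sqrt (\<Sum>a\<leftarrow>A. (g a)\<^sup>2)"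
proof -
  have "L2_set (\<lambda>i. s * f (A!i) + t * g (A!i)) {..<length A} \<le> L2_set (\<lambda>i. s * f (A!i)) {..<length A} + L2_set (\<lambda>i. t * g (A!i)) {..<length A}"
    by (rule L2_set_triangle_ineq)
  also have "\<dots> = s * L2_set (\<lambda>i. f (A!i)) {..<length A} + t * L2_set (\<lambda>i. g (A!i)) {..<length A}"
    using assms by (simp add: L2_set_right_distrib)
  finally show ?thesis by (simp only: sum_list_L2)
qed

lemma aff_eval_comb:
  assumes "s + t = 1"
  shows "aff_eval m a (s *\<^sub>R x + t *\<^sub>R y) (\<lambda>j. s * u j + t * v j) = s * aff_eval m a x u + t * aff_eval m a y v"
proof -
  obtain c d e where a: "a = (c,d,e)" by (cases a) auto
  have "e = s * e + t * e" using assms by (metis mult_1 distrib_right mult.commute)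
  then show ?thesis unfolding a aff_eval_def
    by (simp add: inner_add_right algebra_simps sum.distrib sum_distrib_left)
qed

lemma soc_set_convex:
  "convex {x::'a::euclidean_space. \<exists>u::nat\<Rightarrow>real. (\<forall>a\<in>set Eqs. aff_eval m a x u = 0) \<and> (\<forall>a\<in>set Ineqs. aff_eval m a x u \<le> 0) \<and>
      (\<forall>(A, c)\<in>set Cones. sqrt (\<Sum>a\<leftarrow>A. (aff_eval m a x u)\<^sup>2) \<le> aff_eval m c x u)}"
proof (rule convexI)
  fix x y :: 'a and s t :: real
  assume x: "x \<in> {x. \<exists>u::nat\<Rightarrow>real. (\<forall>a\<in>set Eqs. aff_eval m a x u = 0) \<and> (\<forall>a\<in>set Ineqs. aff_eval m a x u \<le> 0) \<and>
      (\<forall>(A, c)\<in>set Cones. sqrt (\<Sum>a\<leftarrow>A. (aff_eval m a x u)\<^sup>2) \<le> aff_eval m c x u)}"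
    and y: "y \<in> {x. \<exists>u::nat\<Rightarrow>real. (\<forall>a\<in>set Eqs. aff_eval m a x u = 0) \<and> (\<forall>a\<in>set Ineqs. aff_eval m a x u \<le> 0) \<and>
      (\<forall>(A, c)\<in>set Cones. sqrt (\<Sum>a\<leftarrow>A. (aff_eval m a x u)\<^sup>2) \<le> aff_eval m c x u)}"
    and st: "0 \<le> s" "0 \<le> t" "s + t = 1"
  obtain u where u: "\<forall>a\<in>set Eqs. aff_eval m a x u = 0" "\<forall>a\<in>set Ineqs. aff_eval m a x u \<le> 0"
      "\<forall>(A, c)\<in>set Cones. sqrt (\<Sum>a\<leftarrow>A. (aff_eval m a x u)\<^sup>2) \<le> aff_eval m c x u" using x by blast
  obtain v where v: "\<forall>a\<in>set Eqs. aff_eval m a y v = 0" "\<forall>a\<in>set Ineqs. aff_eval m a y v \<le> 0"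
      "\<forall>(A, c)\<in>set Cones. sqrt (\<Sum>a\<leftarrow>A. (aff_eval m a y v)\<^sup>2) \<le> aff_eval m c y v" using y by blast
  define w where "w = (\<lambda>j. s * u j + t * v j)"
  have E: "\<And>a. aff_eval m a (s *\<^sub>R x + t *\<^sub>R y) w = s * aff_eval m a x u + t * aff_eval m a y v"
    unfolding w_def using st(3) by (rule aff_eval_comb)
  have 1: "\<forall>a\<in>set Eqs. aff_eval m a (s *\<^sub>R x + t *\<^sub>R y) w = 0" using u(1) v(1) by (simp add: E)
  have 2: "\<forall>a\<in>set Ineqs. aff_eval m a (s *\<^sub>R x + t *\<^sub>R y) w \<le> 0"
  proof
    fix a assume "a \<in> set Ineqs"
    then have "aff_eval m a x u \<le> 0" "aff_eval m a y v \<le> 0" using u(2) v(2) by auto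
    then show "aff_eval m a (s *\<^sub>R x + t *\<^sub>R y) w \<le> 0" unfolding E using st
      by (simp add: add_nonpos_nonpos mult_nonneg_nonpos)
  qed
  have 3: "\<forall>(A, c)\<in>set Cones. sqrt (\<Sum>a\<leftarrow>A. (aff_eval m a (s *\<^sub>R x + t *\<^sub>R y) w)\<^sup>2) \<le> aff_eval m c (s *\<^sub>R x + t *\<^sub>R y) w"
  proof (clarify)
    fix A c assume Ac: "(A, c) \<in> set Cones"
    then have a1: "sqrt (\<Sum>a\<leftarrow>A. (aff_eval m a x u)\<^sup>2) \<le> aff_eval m c x u"
      and a2: "sqrt (\<Sum>a\<leftarrow>A. (aff_eval m a y v)\<^sup>2) \<le> aff_eval m c y v" using u(3) v(3) by auto
    have "sqrt (\<Sum>a\<leftarrow>A. (aff_eval m a (s *\<^sub>R x + t *\<^sub>R y) w)\<^sup>2)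
        = sqrt (\<Sum>a\<leftarrow>A. (s * aff_eval m a x u + t * aff_eval m a y v)\<^sup>2)" by (simp add: E)
    also have "\<dots> \<le> s * sqrt (\<Sum>a\<leftarrow>A. (aff_eval m a x u)\<^sup>2) + t * sqrt (\<Sum>a\<leftarrow>A. (aff_eval m a y v)\<^sup>2)"
      using mink_list[OF st(1) st(2), where A=A and f="\<lambda>a. aff_eval m a x u" and g="\<lambda>a. aff_eval m a y v"] by simp
    also have "\<dots> \<le> s * aff_eval m c x u + t * aff_eval m c y v"
      using a1 a2 st by (simp add: add_mono mult_left_mono)
    finally show "sqrt (\<Sum>a\<leftarrow>A. (aff_eval m a (s *\<^sub>R x + t *\<^sub>R y) w)\<^sup>2) \<le> aff_eval m c (s *\<^sub>R x + t *\<^sub>R y) w"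
      by (simp add: E)
  qed
  show "s *\<^sub>R x + t *\<^sub>R y \<in> {x. \<exists>u::nat\<Rightarrow>real. (\<forall>a\<in>set Eqs. aff_eval m a x u = 0) \<and> (\<forall>a\<in>set Ineqs. aff_eval m a x u \<le> 0) \<and>
      (\<forall>(A, c)\<in>set Cones. sqrt (\<Sum>a\<leftarrow>A. (aff_eval m a x u)\<^sup>2) \<le> aff_eval m c x u)}"
    using 1 2 3 by blast
qed

type_synonym lf = "real \<times> real \<times> real \<times> real"

definition leval :: "lf \<Rightarrow> real \<Rightarrow> real \<Rightarrow> real \<Rightarrow> real" where
  "leval f X Y L = (case f of (p,q,r,e) \<Rightarrow> p*X + q*Y + r*L + e)"

type_synonym psys = "lf list \<times> lf list \<times> (lf list \<times> lf) list"

definition psat :: "psys \<Rightarrow> real \<Rightarrow> real \<Rightarrow> real \<Rightarrow> bool" where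
  "psat s X Y L = (case s of (E,I,C) \<Rightarrow>
     (\<forall>f\<in>set E. leval f X Y L = 0) \<and> (\<forall>f\<in>set I. leval f X Y L \<le> 0) \<and>
     (\<forall>(A,c)\<in>set C. sqrt (\<Sum>a\<leftarrow>A. (leval a X Y L)\<^sup>2) \<le> leval c X Y L))"

definition g1 :: "lf \<Rightarrow> (real\<times>real) aff_form" where
  "g1 f = (case f of (p,q,r,e) \<Rightarrow> ((0,0), (\<lambda>j. if j=0 then r else if j=1 then p else if j=2 then q else 0), e))"
definition g2 :: "lf \<Rightarrow> (real\<times>real) aff_form" where
  "g2 f = (case f of (p,q,r,e) \<Rightarrow> ((p,q), (\<lambda>j. if j=0 then -r else if j=1 then -p else if j=2 then -q else 0), e + r))"

lemma three: "{..<(3::nat)} = {0,1,2}" by auto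

lemma g1_eval: "aff_eval 3 (g1 f) x u = leval f (u 1) (u 2) (u 0)"
  by (cases f; cases x) (simp add: aff_eval_def g1_def leval_def three algebra_simps)

lemma g2_eval: "aff_eval 3 (g2 f) x u = leval f (fst x - u 1) (snd x - u 2) (1 - u 0)"
  by (cases f; cases x) (simp add: aff_eval_def g2_def leval_def three algebra_simps)

definition good_piece :: "psys \<Rightarrow> (real\<times>real) set \<Rightarrow> bool" where
 "good_piece s S \<longleftrightarrow> (\<forall>X Y L. psat s X Y L \<longrightarrow> 0 \<le> L) \<and> (\<forall>X Y. psat s X Y 0 \<longrightarrow> X = 0 \<and> Y = 0) \<and>
   (\<forall>X Y L. psat s X Y L \<and> 0 < L \<longrightarrow> (X/L, Y/L) \<in> convex hull S) \<and> (\<forall>p\<in>S. psat s (fst p) (snd p) 1) \<and> psat s 0 0 0"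

lemma main:
  assumes G1: "good_piece s1 S1" and G2: "good_piece s2 S2"
  shows "soc_representable (convex hull (S1 \<union> S2))"
proof -
  obtain E1 I1 C1 where s1: "s1 = (E1,I1,C1)" by (cases s1) auto
  obtain E2 I2 C2 where s2: "s2 = (E2,I2,C2)" by (cases s2) auto
  define Eqs where "Eqs = map g1 E1 @ map g2 E2"
  define Ineqs where "Ineqs = map g1 I1 @ map g2 I2"
  define Cones where "Cones = map (\<lambda>(A,c). (map g1 A, g1 c)) C1 @ map (\<lambda>(A,c). (map g2 A, g2 c)) C2"
  define R where "R = {x::real\<times>real. \<exists>u::nat\<Rightarrow>real. (\<forall>a\<in>set Eqs. aff_eval 3 a x u = 0) \<and> (\<forall>a\<in>set Ineqs. aff_eval 3 a x u \<le> 0) \<and>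
      (\<forall>(A, c)\<in>set Cones. sqrt (\<Sum>a\<leftarrow>A. (aff_eval 3 a x u)\<^sup>2) \<le> aff_eval 3 c x u)}"
  have sum1: "\<And>A x u. (\<Sum>a\<leftarrow>map g1 A. (aff_eval 3 a x u)\<^sup>2) = (\<Sum>a\<leftarrow>A. (leval a (u 1) (u 2) (u 0))\<^sup>2)"
    by (simp add: g1_eval o_def)
  have sum2: "\<And>A x u. (\<Sum>a\<leftarrow>map g2 A. (aff_eval 3 a x u)\<^sup>2) = (\<Sum>a\<leftarrow>A. (leval a (fst x - u 1) (snd x - u 2) (1 - u 0))\<^sup>2)"
    by (simp add: g2_eval o_def)
  have sum1': "\<And>A x u. sum_list (map ((\<lambda>a. (aff_eval 3 a x u)\<^sup>2) \<circ> g1) A) = (\<Sum>a\<leftarrow>A. (leval a (u 1) (u 2) (u 0))\<^sup>2)"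
    using sum1 by simp
  have sum2': "\<And>A x u. sum_list (map ((\<lambda>a. (aff_eval 3 a x u)\<^sup>2) \<circ> g2) A) = (\<Sum>a\<leftarrow>A. (leval a (fst x - u 1) (snd x - u 2) (1 - u 0))\<^sup>2)"
    using sum2 by simp
  have Rchar: "\<And>x. x \<in> R \<longleftrightarrow> (\<exists>u::nat\<Rightarrow>real. psat s1 (u 1) (u 2) (u 0) \<and> psat s2 (fst x - u 1) (snd x - u 2) (1 - u 0))"
    unfolding R_def Eqs_def Ineqs_def Cones_def s1 s2 psat_def
    by (simp add: g1_eval g2_eval sum1' sum2' ball_Un split_beta) blast
  have convR: "convex R" unfolding R_def by (rule soc_set_convex)
  have g1a: "\<And>X Y L. psat s1 X Y L \<Longrightarrow> 0 \<le> L" and g1b: "\<And>X Y. psat s1 X Y 0 \<Longrightarrow> X = 0 \<and> Y = 0"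
    and g1c: "\<And>X Y L. psat s1 X Y L \<Longrightarrow> 0 < L \<Longrightarrow> (X/L, Y/L) \<in> convex hull S1"
    and g1d: "\<And>p. p\<in>S1 \<Longrightarrow> psat s1 (fst p) (snd p) 1" and g1e: "psat s1 0 0 0"
    using G1 unfolding good_piece_def by auto
  have g2a: "\<And>X Y L. psat s2 X Y L \<Longrightarrow> 0 \<le> L" and g2b: "\<And>X Y. psat s2 X Y 0 \<Longrightarrow> X = 0 \<and> Y = 0"
    and g2c: "\<And>X Y L. psat s2 X Y L \<Longrightarrow> 0 < L \<Longrightarrow> (X/L, Y/L) \<in> convex hull S2"
    and g2d: "\<And>p. p\<in>S2 \<Longrightarrow> psat s2 (fst p) (snd p) 1" and g2e: "psat s2 0 0 0"
    using G2 unfolding good_piece_def by auto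
  have "convex hull (S1 \<union> S2) = R"
  proof
    show "convex hull (S1 \<union> S2) \<subseteq> R"
    proof (rule hull_minimal[where S=convex, OF _ convR])
      show "S1 \<union> S2 \<subseteq> R"
      proof
        fix p assume "p \<in> S1 \<union> S2"
        then show "p \<in> R"
        proof
          assume p: "p \<in> S1"
          let ?u = "\<lambda>j::nat. if j = 0 then 1 else if j = 1 then fst p else if j = 2 then snd p else 0"
          have "psat s1 (?u 1) (?u 2) (?u 0)" using g1d[OF p] by simp
          moreover have "psat s2 (fst p - ?u 1) (snd p - ?u 2) (1 - ?u 0)" using g2e by simp
          ultimately show ?thesis unfolding Rchar by (intro exI[of _ ?u]) blast
        next
          assume p: "p \<in> S2"
          let ?u = "\<lambda>j::nat. 0::real"
          have "psat s1 (?u 1) (?u 2) (?u 0)" using g1e by simp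
          moreover have "psat s2 (fst p - ?u 1) (snd p - ?u 2) (1 - ?u 0)" using g2d[OF p] by simp
          ultimately show ?thesis unfolding Rchar by (intro exI[of _ ?u]) blast
        qed
      qed
    qed
  next
    show "R \<subseteq> convex hull (S1 \<union> S2)"
    proof
      fix p assume "p \<in> R"
      then obtain u :: "nat \<Rightarrow> real" where u1: "psat s1 (u 1) (u 2) (u 0)" and u2: "psat s2 (fst p - u 1) (snd p - u 2) (1 - u 0)"
        unfolding Rchar by blast
      have L0: "0 \<le> u 0" using g1a[OF u1] .
      have L1: "0 \<le> 1 - u 0" using g2a[OF u2] .
      have sub1: "convex hull S1 \<subseteq> convex hull (S1 \<union> S2)" by (rule hull_mono) auto
      have sub2: "convex hull S2 \<subseteq> convex hull (S1 \<union> S2)" by (rule hull_mono) auto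
      show "p \<in> convex hull (S1 \<union> S2)"
      proof (cases "u 0 = 0")
        case True
        then have "u 1 = 0 \<and> u 2 = 0" using g1b[of "u 1" "u 2"] u1 by simp
        then have "(fst p / 1, snd p / 1) \<in> convex hull S2" using g2c[of "fst p - u 1" "snd p - u 2" "1 - u 0"] u2 True by simp
        then show ?thesis using sub2 by auto
      next
        case False
        note F = False
        show ?thesis
        proof (cases "u 0 = 1")
          case True
          then have "fst p - u 1 = 0 \<and> snd p - u 2 = 0" using g2b[of "fst p - u 1" "snd p - u 2"] u2 by simp
          then have "p = (u 1 / u 0, u 2 / u 0)" using True by (cases p) auto
          moreover have "(u 1 / u 0, u 2 / u 0) \<in> convex hull S1" using g1c[OF u1] True by simp
          ultimately show ?thesis using sub1 by auto
        next
          case False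
          have l0: "0 < u 0" using L0 F by auto
          have l1: "0 < 1 - u 0" using L1 False by auto
          have q1: "(u 1 / u 0, u 2 / u 0) \<in> convex hull (S1 \<union> S2)" using g1c[OF u1 l0] sub1 by auto
          have q2: "((fst p - u 1) / (1 - u 0), (snd p - u 2) / (1 - u 0)) \<in> convex hull (S1 \<union> S2)"
            using g2c[OF u2 l1] sub2 by auto
          have "u 0 *\<^sub>R (u 1 / u 0, u 2 / u 0) + (1 - u 0) *\<^sub>R ((fst p - u 1) / (1 - u 0), (snd p - u 2) / (1 - u 0)) \<in> convex hull (S1 \<union> S2)"
            by (rule convexD[OF convex_convex_hull q1 q2]) (use L0 L1 in auto)
          moreover have "u 0 *\<^sub>R (u 1 / u 0, u 2 / u 0) + (1 - u 0) *\<^sub>R ((fst p - u 1) / (1 - u 0), (snd p - u 2) / (1 - u 0)) = p"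
            using l0 l1 by (cases p) simp
          ultimately show ?thesis by simp
        qed
      qed
    qed
  qed
  then show ?thesis unfolding soc_representable_def R_def by blast
qed

definition emptys :: psys where "emptys = ([(1,0,0,0),(0,1,0,0),(0,0,1,0)],[],[])"

lemma good_empty: "good_piece emptys {}"
  unfolding good_piece_def psat_def emptys_def leval_def by simp

definition segV :: "real \<Rightarrow> real \<Rightarrow> psys" where
  "segV c d = ([(1,0,0,0)], [(0,-1,c,0),(0,1,-d,0),(0,0,-1,0)], [])"
definition segH :: "real \<Rightarrow> real \<Rightarrow> psys" where
  "segH c d = ([(0,1,0,0)], [(-1,0,c,0),(1,0,-d,0),(0,0,-1,0)], [])"

lemma good_segV: "good_piece (segV c d) ((\<lambda>y. (0,y)) ` {c..d})"
proof -
  have P: "\<And>X Y L. psat (segV c d) X Y L \<longleftrightarrow> X = 0 \<and> c*L \<le> Y \<and> Y \<le> d*L \<and> 0 \<le> L"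
    unfolding psat_def segV_def leval_def by auto
  have c: "(X/L, Y/L) \<in> convex hull ((\<lambda>y. (0::real,y)) ` {c..d})" if "psat (segV c d) X Y L" "0 < L" for X Y L
  proof -
    have "X = 0" "c*L \<le> Y" "Y \<le> d*L" using that P by auto
    then have "c \<le> Y/L" "Y/L \<le> d" using \<open>0<L\<close> by (auto simp: pos_le_divide_eq pos_divide_le_eq)
    then have "(X/L, Y/L) \<in> (\<lambda>y. (0::real,y)) ` {c..d}" using \<open>X=0\<close> by auto
    then show ?thesis by (rule hull_inc)
  qed
  show ?thesis unfolding good_piece_def using c by (auto simp: P)
qed

lemma good_segH: "good_piece (segH c d) ((\<lambda>x. (x,0)) ` {c..d})"
proof -
  have P: "\<And>X Y L. psat (segH c d) X Y L \<longleftrightarrow> Y = 0 \<and> c*L \<le> X \<and> X \<le> d*L \<and> 0 \<le> L"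
    unfolding psat_def segH_def leval_def by auto
  have c: "(X/L, Y/L) \<in> convex hull ((\<lambda>x. (x,0::real)) ` {c..d})" if "psat (segH c d) X Y L" "0 < L" for X Y L
  proof -
    have "Y = 0" "c*L \<le> X" "X \<le> d*L" using that P by auto
    then have "c \<le> X/L" "X/L \<le> d" using \<open>0<L\<close> by (auto simp: pos_le_divide_eq pos_divide_le_eq)
    then have "(X/L, Y/L) \<in> (\<lambda>x. (x,0::real)) ` {c..d}" using \<open>Y=0\<close> by auto
    then show ?thesis by (rule hull_inc)
  qed
  show ?thesis unfolding good_piece_def using c by (auto simp: P)
qed

lemma frac_aux:
  fixes p q d a b \<beta> :: real
  assumes "d \<noteq> 0" "a \<noteq> 0" "b \<noteq> 0"
  shows "p/d * (\<beta>/a) + q/d * (\<beta>/b) = (\<beta> * (b*p + a*q)) / (a*b*d)"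
  using assms by (simp add: field_simps)

lemma comb3: "(1 - t)*r + t*m*p + t*(1-m)*q = (1-t)*r + t*(m*p + (1-m)*(q::real))"
  by (simp add: algebra_simps)

lemma conv_aux:
  fixes c k y :: real
  assumes "c - k \<noteq> 0"
  shows "(1 - (y-k)/(c-k)) * k + ((y-k)/(c-k)) * c = y"
proof -
  have r: "\<And>r::real. (1 - r) * k + r * c = k + r * (c - k)" by (simp add: algebra_simps)
  have "(1 - (y-k)/(c-k)) * k + ((y-k)/(c-k)) * c = k + (y-k)/(c-k) * (c - k)" by (rule r)
  also have "\<dots> = y" using assms by simp
  finally show ?thesis .
qed

lemma hull_arc:
  fixes \<beta> a b x0 y0 :: real
  assumes b0: "0 < \<beta>" and a0: "0 < a" and ab: "a \<le> b" and x1: "a \<le> x0" and x2: "x0 \<le> b"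
    and h: "\<beta> \<le> x0 * y0" and ch: "\<beta> * x0 + a * b * y0 \<le> \<beta> * (a + b)"
  shows "(x0, y0) \<in> convex hull ((\<lambda>t. (t, \<beta>/t)) ` {a..b})"
proof -
  let ?C = "(\<lambda>t. (t, \<beta>/t)) ` {a..b}"
  have x0p: "0 < x0" using a0 x1 by linarith
  have ylow: "\<beta>/x0 \<le> y0" using h x0p by (simp add: pos_divide_le_eq mult.commute)
  show ?thesis
  proof (cases "a = b")
    case True
    then have xa: "x0 = a" using x1 x2 by auto
    have "a * (a * y0) \<le> a * \<beta>" using ch True xa by (simp add: algebra_simps)
    then have "a * y0 \<le> \<beta>" using a0 by simp
    then have "y0 \<le> \<beta>/x0" using xa a0 by (simp add: pos_le_divide_eq mult.commute)
    then have "y0 = \<beta>/x0" using ylow by simp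
    then have "(x0,y0) \<in> ?C" using xa ab by auto
    then show ?thesis by (rule hull_inc)
  next
    case False
    then have ab': "a < b" using ab by simp
    define \<mu> where "\<mu> = (b - x0)/(b - a)"
    define c0 where "c0 = \<beta> * (a + b - x0)/(a*b)"
    have mu0: "0 \<le> \<mu>" "\<mu> \<le> 1" using ab' x1 x2 by (auto simp: \<mu>_def divide_simps)
    have cval: "\<mu> * (\<beta>/a) + (1-\<mu>) * (\<beta>/b) = c0"
    proof -
      have nz: "b - a \<noteq> 0" "a \<noteq> 0" "b \<noteq> 0" using ab' a0 by auto
      have m1: "1 - \<mu> = (x0 - a)/(b - a)" unfolding \<mu>_def using nz by (simp add: field_simps)
      have "(b - x0)/(b - a) * (\<beta>/a) + (x0 - a)/(b - a) * (\<beta>/b) = (\<beta> * (b*(b - x0) + a*(x0 - a))) / (a*b*(b-a))"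
        using frac_aux[OF nz] by simp
      also have "\<beta> * (b*(b - x0) + a*(x0 - a)) = (\<beta> * (a + b - x0)) * (b - a)" by (simp add: algebra_simps)
      also have "(\<beta> * (a + b - x0)) * (b - a) / (a*b*(b-a)) = c0" unfolding c0_def using nz by simp
      finally show ?thesis using m1 unfolding \<mu>_def by simp
    qed
    have xval: "\<mu> * a + (1-\<mu>) * b = x0"
    proof -
      have "\<mu> * (b - a) = b - x0" unfolding \<mu>_def using ab' by simp
      moreover have "\<mu> * a + (1-\<mu>) * b = b - \<mu> * (b - a)" by (simp add: algebra_simps)
      ultimately show ?thesis by simp
    qed
    have yhigh: "y0 \<le> c0"
    proof -
      have "a*b*y0 \<le> \<beta> * (a + b - x0)" using ch by (simp add: algebra_simps)
      then show ?thesis unfolding c0_def using a0 ab' by (simp add: pos_le_divide_eq mult.commute)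
    qed
    define \<theta> where "\<theta> = (if c0 = \<beta>/x0 then 1 else (y0 - \<beta>/x0)/(c0 - \<beta>/x0))"
    have th0: "0 \<le> \<theta>" "\<theta> \<le> 1"
    proof -
      have N: "0 \<le> y0 - \<beta>/x0" "y0 - \<beta>/x0 \<le> c0 - \<beta>/x0" using ylow yhigh by auto
      show "0 \<le> \<theta>" unfolding \<theta>_def using N by (auto intro: divide_nonneg_nonneg)
      show "\<theta> \<le> 1" unfolding \<theta>_def using N by (auto intro: divide_le_eq_1_pos[THEN iffD2])
    qed
    have yval: "(1-\<theta>) * (\<beta>/x0) + \<theta> * c0 = y0"
    proof (cases "c0 = \<beta>/x0")
      case True then show ?thesis using ylow yhigh by (simp add: \<theta>_def)
    next
      case False then have "c0 - \<beta>/x0 \<noteq> 0" by simp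
      have "\<forall>k c y::real. c - k \<noteq> 0 \<longrightarrow> (1 - (y-k)/(c-k)) * k + ((y-k)/(c-k)) * c = y"
      proof (intro allI impI)
        fix k c y :: real assume "c - k \<noteq> 0"
        have r: "\<And>r::real. (1 - r) * k + r * c = k + r * (c - k)" by (simp add: algebra_simps)
        have "(1 - (y-k)/(c-k)) * k + ((y-k)/(c-k)) * c = k + (y-k)/(c-k) * (c - k)" by (rule r)
        also have "\<dots> = y" using \<open>c - k \<noteq> 0\<close> by simp
        finally show "(1 - (y-k)/(c-k)) * k + ((y-k)/(c-k)) * c = y" .
      qed
      note G = this
      have th: "\<theta> = (y0 - \<beta>/x0)/(c0 - \<beta>/x0)" using False by (simp add: \<theta>_def)
      have "c0 - \<beta>/x0 \<noteq> 0" using False by simp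
      then show ?thesis unfolding th by (rule conv_aux)
    qed
    have mem: "(x0, y0) \<in> convex hull {(x0, \<beta>/x0), (a, \<beta>/a), (b, \<beta>/b)}"
      unfolding convex_hull_3
    proof (intro CollectI exI conjI)
      show "0 \<le> 1 - \<theta>" "0 \<le> \<theta> * \<mu>" "0 \<le> \<theta> * (1 - \<mu>)" using th0 mu0 by auto
      show "1 - \<theta> + \<theta> * \<mu> + \<theta> * (1 - \<mu>) = 1" by (simp add: algebra_simps)
      have e1: "(1 - \<theta>) * x0 + \<theta> * \<mu> * a + \<theta> * (1 - \<mu>) * b = x0"
      proof -
        have "(1 - \<theta>) * x0 + \<theta> * \<mu> * a + \<theta> * (1 - \<mu>) * b = (1 - \<theta>) * x0 + \<theta> * (\<mu> * a + (1-\<mu>) * b)"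
          by (simp add: algebra_simps)
        also have "\<dots> = x0" unfolding xval by (simp add: algebra_simps)
        finally show ?thesis .
      qed
      have e2: "(1 - \<theta>) * (\<beta>/x0) + \<theta> * \<mu> * (\<beta>/a) + \<theta> * (1 - \<mu>) * (\<beta>/b) = y0"
      proof -
        have "(1 - \<theta>) * (\<beta>/x0) + \<theta> * \<mu> * (\<beta>/a) + \<theta> * (1 - \<mu>) * (\<beta>/b) = (1 - \<theta>) * (\<beta>/x0) + \<theta> * (\<mu> * (\<beta>/a) + (1-\<mu>) * (\<beta>/b))"
          by (rule comb3)
        also have "\<dots> = y0" unfolding cval by (rule yval)
        finally show ?thesis .
      qed
      show "(x0, y0) = (1 - \<theta>) *\<^sub>R (x0, \<beta> / x0) + (\<theta> * \<mu>) *\<^sub>R (a, \<beta> / a) + (\<theta> * (1 - \<mu>)) *\<^sub>R (b, \<beta> / b)"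
        using e1 e2 by simp
    qed
    have "{(x0, \<beta>/x0), (a, \<beta>/a), (b, \<beta>/b)} \<subseteq> ?C" using x1 x2 ab by auto
    then have "convex hull {(x0, \<beta>/x0), (a, \<beta>/a), (b, \<beta>/b)} \<subseteq> convex hull ?C" by (rule hull_mono)
    then show ?thesis using mem by auto
  qed
qed

definition arcs :: "real \<Rightarrow> real \<Rightarrow> real \<Rightarrow> real \<Rightarrow> real \<Rightarrow> psys" where
  "arcs sx sy \<beta> a b = ([], [(-sx,0,a,0),(sx,0,-b,0),(0,0,-1,0),(\<beta> * sx, a*b * sy, -(\<beta>*(a+b)), 0)],
     [([(sx,-sy,0,0),(0,0,2 * sqrt \<beta>,0)], (sx,sy,0,0))])"

lemma cone_iff:
  fixes P Q L \<beta> :: real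
  assumes "0 \<le> \<beta>"
  shows "sqrt ((P - Q)\<^sup>2 + (2 * sqrt \<beta> * L)\<^sup>2) \<le> P + Q \<longleftrightarrow> 0 \<le> P + Q \<and> \<beta> * L\<^sup>2 \<le> P * Q"
proof -
  have e: "(2 * sqrt \<beta> * L)\<^sup>2 = 4 * \<beta> * L\<^sup>2" using assms by (simp add: power_mult_distrib)
  have k: "(P + Q)\<^sup>2 - (P - Q)\<^sup>2 = 4 * (P * Q)" by (simp add: power2_eq_square algebra_simps)
  show ?thesis
  proof
    assume h: "sqrt ((P - Q)\<^sup>2 + (2 * sqrt \<beta> * L)\<^sup>2) \<le> P + Q"
    have "0 \<le> sqrt ((P - Q)\<^sup>2 + (2 * sqrt \<beta> * L)\<^sup>2)" by simp
    then have "0 \<le> P + Q" using h by linarith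
    moreover have "(P - Q)\<^sup>2 + 4 * \<beta> * L\<^sup>2 \<le> (P + Q)\<^sup>2" using sqrt_le_D[OF h] e by simp
    ultimately show "0 \<le> P + Q \<and> \<beta> * L\<^sup>2 \<le> P * Q" using k by linarith
  next
    assume h: "0 \<le> P + Q \<and> \<beta> * L\<^sup>2 \<le> P * Q"
    have "(P - Q)\<^sup>2 + (2 * sqrt \<beta> * L)\<^sup>2 \<le> (P + Q)\<^sup>2" using h e k by linarith
    then show "sqrt ((P - Q)\<^sup>2 + (2 * sqrt \<beta> * L)\<^sup>2) \<le> P + Q" using h by (intro real_le_lsqrt) auto
  qed
qed

lemma psat_arcs:
  assumes "0 \<le> \<beta>"
  shows "psat (arcs sx sy \<beta> a b) X Y L \<longleftrightarrow>
    a*L \<le> sx*X \<and> sx*X \<le> b*L \<and> 0 \<le> L \<and> \<beta>*(sx*X) + a*b*(sy*Y) \<le> \<beta>*(a+b)*L \<and>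
    0 \<le> sx*X + sy*Y \<and> \<beta> * L\<^sup>2 \<le> (sx*X) * (sy*Y)"
proof -
  have "psat (arcs sx sy \<beta> a b) X Y L \<longleftrightarrow>
    a*L \<le> sx*X \<and> sx*X \<le> b*L \<and> 0 \<le> L \<and> \<beta>*(sx*X) + a*b*(sy*Y) \<le> \<beta>*(a+b)*L \<and>
    sqrt ((sx*X - sy*Y)\<^sup>2 + (2 * sqrt \<beta> * L)\<^sup>2) \<le> sx*X + sy*Y"
    unfolding psat_def arcs_def leval_def by (simp add: algebra_simps)
  then show ?thesis using cone_iff[OF assms] by simp
qed

lemma good_arc:
  fixes sx sy \<beta> a b :: real
  assumes b0: "0 < \<beta>" and a0: "0 < a" and ab: "a \<le> b" and sx: "sx * sx = 1" and sy: "sy * sy = 1"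
  shows "good_piece (arcs sx sy \<beta> a b) ((\<lambda>t. (sx*t, sy*(\<beta>/t))) ` {a..b})"
proof -
  note P = psat_arcs[OF less_imp_le[OF b0]]
  define f where "f = (\<lambda>p::real\<times>real. (sx * fst p, sy * snd p))"
  have lin: "linear f" unfolding f_def by (intro linearI) (auto simp: algebra_simps)
  have img: "(\<lambda>t. (sx*t, sy*(\<beta>/t))) ` {a..b} = f ` ((\<lambda>t. (t, \<beta>/t)) ` {a..b})"
    unfolding f_def by (simp add: image_image)
  have A: "0 \<le> L" if "psat (arcs sx sy \<beta> a b) X Y L" for X Y L using that P by auto
  have B: "X = 0 \<and> Y = 0" if "psat (arcs sx sy \<beta> a b) X Y 0" for X Y
  proof -
    have h: "sx*X = 0" "a*b*(sy*Y) \<le> 0" "0 \<le> sx*X + sy*Y" using that P by auto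
    have "0 < a*b" using a0 ab by simp
    then have "sy*Y \<le> 0" using h(2) mult_le_cancel_left_pos[of "a*b" "sy*Y" 0] by linarith
    then have "sy*Y = 0" using h by linarith
    then have "sx*(sx*X) = 0" "sy*(sy*Y) = 0" using h by auto
    then show ?thesis using sx sy by (simp add: mult.assoc[symmetric])
  qed
  have C: "(X/L, Y/L) \<in> convex hull ((\<lambda>t. (sx*t, sy*(\<beta>/t))) ` {a..b})"
    if "psat (arcs sx sy \<beta> a b) X Y L" "0 < L" for X Y L
  proof -
    have L: "0 < L" by fact
    define X' where "X' = sx*X"
    define Y' where "Y' = sy*Y"
    have h: "a*L \<le> X'" "X' \<le> b*L" "\<beta>*X' + a*b*Y' \<le> \<beta>*(a+b)*L" "\<beta> * L\<^sup>2 \<le> X' * Y'"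
      using that(1) P unfolding X'_def Y'_def by auto
    have 1: "a \<le> X'/L" "X'/L \<le> b" using h L by (auto simp: pos_le_divide_eq pos_divide_le_eq)
    have 2: "\<beta> \<le> (X'/L) * (Y'/L)" using h(4) L by (simp add: pos_le_divide_eq power2_eq_square)
    have "\<beta>*(X'/L) + a*b*(Y'/L) = (\<beta>*X' + a*b*Y')/L" by (simp add: add_divide_distrib)
    also have "\<dots> \<le> \<beta>*(a+b)" using h(3) L by (simp add: pos_divide_le_eq)
    finally have 3: "\<beta>*(X'/L) + a*b*(Y'/L) \<le> \<beta>*(a+b)" .
    have "(X'/L, Y'/L) \<in> convex hull ((\<lambda>t. (t, \<beta>/t)) ` {a..b})"
      by (rule hull_arc[OF b0 a0 ab 1 2 3])
    then have "f (X'/L, Y'/L) \<in> convex hull ((\<lambda>t. (sx*t, sy*(\<beta>/t))) ` {a..b})"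
      unfolding img convex_hull_linear_image[OF lin, symmetric] by blast
    moreover have "f (X'/L, Y'/L) = (X/L, Y/L)"
      unfolding f_def X'_def Y'_def using sx sy by (simp add: mult.assoc[symmetric])
    ultimately show ?thesis by simp
  qed
  have D: "psat (arcs sx sy \<beta> a b) (fst p) (snd p) 1" if pin: "p \<in> (\<lambda>t. (sx*t, sy*(\<beta>/t))) ` {a..b}" for p
  proof -
    obtain t where t': "t \<in> {a..b}" and p: "p = (sx*t, sy*(\<beta>/t))" using pin by (rule imageE)
    have t: "a \<le> t" "t \<le> b" using t' by auto
    have t0: "0 < t" using a0 t by linarith
    have e1: "sx*(sx*t) = t" "sy*(sy*(\<beta>/t)) = \<beta>/t" using sx sy by (simp_all add: mult.assoc[symmetric])
    have "(t - a) * (t - b) \<le> 0" using t by (simp add: mult_nonneg_nonpos)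
    then have q: "t*t + a*b \<le> (a+b)*t" by (simp add: algebra_simps)
    have "\<beta>*t + a*b*(\<beta>/t) = \<beta> * (t*t + a*b) / t" using t0 by (simp add: field_simps)
    also have "\<dots> \<le> \<beta> * ((a+b)*t) / t" using q b0 t0 by (intro divide_right_mono mult_left_mono) auto
    also have "\<dots> = \<beta>*(a+b)" using t0 by simp
    finally have ch: "\<beta>*t + a*b*(\<beta>/t) \<le> \<beta>*(a+b)*1" by simp
    have "0 \<le> t + \<beta>/t" using t0 b0 by simp
    moreover have "\<beta> * 1\<^sup>2 \<le> t * (\<beta>/t)" using t0 by simp
    moreover have "a*1 \<le> t" "t \<le> b*1" "(0::real) \<le> 1" using t by auto
    ultimately show ?thesis unfolding p fst_conv snd_conv P e1 using ch by blast
  qed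
  have E: "psat (arcs sx sy \<beta> a b) 0 0 0" using P by simp
  show ?thesis unfolding good_piece_def using A B C D E by blast
qed

lemma canon:
  fixes \<beta> pl pu ql qu t :: real
  assumes b0: "0 < \<beta>"
  shows "(0 < t \<and> pl \<le> t \<and> t \<le> pu \<and> ql \<le> \<beta>/t \<and> \<beta>/t \<le> qu) \<longleftrightarrow>
         (0 < qu \<and> max pl (\<beta>/qu) \<le> t \<and> t \<le> (if 0 < ql then min pu (\<beta>/ql) else pu))"
proof
  assume h: "0 < t \<and> pl \<le> t \<and> t \<le> pu \<and> ql \<le> \<beta>/t \<and> \<beta>/t \<le> qu"
  then have t0: "0 < t" by simp
  have "0 < \<beta>/t" using b0 t0 by simp
  then have q: "0 < qu" using h by linarith
  have "\<beta> \<le> qu * t" using h t0 by (simp add: pos_divide_le_eq)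
  then have "\<beta>/qu \<le> t" using q by (simp add: pos_divide_le_eq mult.commute)
  moreover have "t \<le> \<beta>/ql" if "0 < ql"
  proof -
    have "ql * t \<le> \<beta>" using h t0 by (simp add: pos_le_divide_eq)
    then show ?thesis using that by (simp add: pos_le_divide_eq mult.commute)
  qed
  ultimately show "0 < qu \<and> max pl (\<beta>/qu) \<le> t \<and> t \<le> (if 0 < ql then min pu (\<beta>/ql) else pu)"
    using h q by auto
next
  assume h: "0 < qu \<and> max pl (\<beta>/qu) \<le> t \<and> t \<le> (if 0 < ql then min pu (\<beta>/ql) else pu)"
  have q: "0 < qu" using h by simp
  have "0 < \<beta>/qu" using q b0 by simp
  then have t0: "0 < t" using h by linarith
  have "\<beta>/qu \<le> t" using h by simp
  then have "\<beta> \<le> t * qu" using q by (simp add: pos_divide_le_eq)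
  then have 1: "\<beta>/t \<le> qu" using t0 by (simp add: pos_divide_le_eq mult.commute)
  have 2: "ql \<le> \<beta>/t"
  proof (cases "0 < ql")
    case True
    then have "t \<le> \<beta>/ql" using h by simp
    then have "t * ql \<le> \<beta>" using True by (simp add: pos_le_divide_eq)
    then show ?thesis using t0 by (simp add: pos_le_divide_eq mult.commute)
  next
    case False
    have "0 < \<beta>/t" using b0 t0 by simp
    then show ?thesis using False by linarith
  qed
  have "pl \<le> t" "t \<le> pu" using h by (auto split: if_splits)
  then show "0 < t \<and> pl \<le> t \<and> t \<le> pu \<and> ql \<le> \<beta>/t \<and> \<beta>/t \<le> qu" using t0 1 2 by simp
qed

definition apiece :: "real \<Rightarrow> real \<Rightarrow> real \<Rightarrow> real \<Rightarrow> real \<Rightarrow> real \<Rightarrow> real \<Rightarrow> psys \<times> (real\<times>real) set" where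
  "apiece sx sy \<beta> pl pu ql qu = (let a = max pl (\<beta>/qu); b = (if 0 < ql then min pu (\<beta>/ql) else pu) in
     if 0 < qu \<and> a \<le> b then (arcs sx sy \<beta> a b, (\<lambda>t. (sx*t, sy*(\<beta>/t))) ` {a..b}) else (emptys, {}))"

lemma apiece_good:
  fixes sx sy \<beta> pl pu ql qu :: real
  assumes b0: "0 < \<beta>" and sx: "sx * sx = 1" and sy: "sy * sy = 1"
  shows "good_piece (fst (apiece sx sy \<beta> pl pu ql qu)) (snd (apiece sx sy \<beta> pl pu ql qu))"
proof -
  define a where "a = max pl (\<beta>/qu)"
  define b where "b = (if 0 < ql then min pu (\<beta>/ql) else pu)"
  show ?thesis
  proof (cases "0 < qu \<and> a \<le> b")
    case True
    have "0 < \<beta>/qu" using True b0 by simp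
    then have a0: "0 < a" unfolding a_def by linarith
    have "apiece sx sy \<beta> pl pu ql qu = (arcs sx sy \<beta> a b, (\<lambda>t. (sx*t, sy*(\<beta>/t))) ` {a..b})"
      unfolding apiece_def Let_def a_def[symmetric] b_def[symmetric] using True by simp
    then show ?thesis using good_arc[OF b0 a0 _ sx sy] True by simp
  next
    case False
    have "apiece sx sy \<beta> pl pu ql qu = (emptys, {})"
      unfolding apiece_def Let_def a_def[symmetric] b_def[symmetric] using False by simp
    then show ?thesis using good_empty by simp
  qed
qed

lemma apiece_set:
  fixes sx sy \<beta> pl pu ql qu :: real
  assumes b0: "0 < \<beta>" and sx: "sx * sx = 1" and sy: "sy * sy = 1"
  shows "snd (apiece sx sy \<beta> pl pu ql qu) =
     {p. 0 < sx * fst p \<and> pl \<le> sx * fst p \<and> sx * fst p \<le> pu \<and> ql \<le> \<beta>/(sx * fst p) \<and> \<beta>/(sx * fst p) \<le> qu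
         \<and> snd p = sy * (\<beta>/(sx * fst p))}"
proof -
  define a where "a = max pl (\<beta>/qu)"
  define b where "b = (if 0 < ql then min pu (\<beta>/ql) else pu)"
  have C: "\<And>t. (0 < t \<and> pl \<le> t \<and> t \<le> pu \<and> ql \<le> \<beta>/t \<and> \<beta>/t \<le> qu) \<longleftrightarrow> (0 < qu \<and> a \<le> t \<and> t \<le> b)"
    unfolding a_def b_def by (rule canon[OF b0])
  have S: "snd (apiece sx sy \<beta> pl pu ql qu) = (if 0 < qu \<and> a \<le> b then (\<lambda>t. (sx*t, sy*(\<beta>/t))) ` {a..b} else {})"
    unfolding apiece_def Let_def a_def[symmetric] b_def[symmetric] by simp
  show ?thesis
  proof (rule set_eqI)
    fix p :: "real \<times> real"
    obtain x y where p: "p = (x,y)" by (cases p) auto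
    have "p \<in> snd (apiece sx sy \<beta> pl pu ql qu) \<longleftrightarrow> (0 < qu \<and> a \<le> sx*x \<and> sx*x \<le> b) \<and> y = sy * (\<beta>/(sx*x))"
    proof
      assume "p \<in> snd (apiece sx sy \<beta> pl pu ql qu)"
      then have q: "0 < qu \<and> a \<le> b" and pin: "p \<in> (\<lambda>t. (sx*t, sy*(\<beta>/t))) ` {a..b}" unfolding S by (auto split: if_splits)
      from pin obtain t where t: "t \<in> {a..b}" "p = (sx*t, sy*(\<beta>/t))" by (rule imageE)
      then have xt: "x = sx*t" "y = sy*(\<beta>/t)" using p by auto
      have "sx*x = t" using xt sx by (simp add: mult.assoc[symmetric])
      then show "(0 < qu \<and> a \<le> sx*x \<and> sx*x \<le> b) \<and> y = sy * (\<beta>/(sx*x))" using q t(1) xt(2) by simp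
    next
      assume h: "(0 < qu \<and> a \<le> sx*x \<and> sx*x \<le> b) \<and> y = sy * (\<beta>/(sx*x))"
      have "x = sx*(sx*x)" using sx by (simp add: mult.assoc[symmetric])
      then have "p = (\<lambda>t. (sx*t, sy*(\<beta>/t))) (sx*x)" using h p by simp
      moreover have "sx*x \<in> {a..b}" using h by simp
      ultimately have "p \<in> (\<lambda>t. (sx*t, sy*(\<beta>/t))) ` {a..b}" by blast
      then show "p \<in> snd (apiece sx sy \<beta> pl pu ql qu)" unfolding S using h by auto
    qed
    also have "\<dots> \<longleftrightarrow> p \<in> {p. 0 < sx * fst p \<and> pl \<le> sx * fst p \<and> sx * fst p \<le> pu \<and> ql \<le> \<beta>/(sx * fst p) \<and> \<beta>/(sx * fst p) \<le> qu
         \<and> snd p = sy * (\<beta>/(sx * fst p))}"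
      using C[of "sx*x"] p by auto
    finally show "p \<in> snd (apiece sx sy \<beta> pl pu ql qu) \<longleftrightarrow> p \<in> {p. 0 < sx * fst p \<and> pl \<le> sx * fst p \<and> sx * fst p \<le> pu \<and> ql \<le> \<beta>/(sx * fst p) \<and> \<beta>/(sx * fst p) \<le> qu
         \<and> snd p = sy * (\<beta>/(sx * fst p))}" .
  qed
qed

lemma divkey: "(x::real) \<noteq> 0 \<Longrightarrow> (x*y = \<alpha> \<longleftrightarrow> y = \<alpha>/x)"
  by (auto simp: field_simps)

lemma Tpos:
  fixes xl xu yl yu \<alpha> :: real
  assumes a0: "0 < \<alpha>"
  shows "{(x, y). x * y = \<alpha> \<and> x \<in> {xl..xu} \<and> y \<in> {yl..yu}} =
    snd (apiece 1 1 \<alpha> xl xu yl yu) \<union> snd (apiece (-1) (-1) \<alpha> (-xu) (-xl) (-yu) (-yl))"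
  unfolding apiece_set[OF a0, of 1 1, simplified] apiece_set[OF a0, of "-1" "-1", simplified]
proof (rule set_eqI)
  fix p :: "real \<times> real"
  obtain x y where p: "p = (x,y)" by (cases p) auto
  show "p \<in> {(x, y). x * y = \<alpha> \<and> x \<in> {xl..xu} \<and> y \<in> {yl..yu}} \<longleftrightarrow>
    p \<in> {p. 0 < fst p \<and> xl \<le> fst p \<and> fst p \<le> xu \<and> yl \<le> \<alpha> / fst p \<and> \<alpha> / fst p \<le> yu \<and> snd p = \<alpha> / fst p} \<union>
         {p. fst p < 0 \<and> - xu \<le> - fst p \<and> - fst p \<le> - xl \<and> - yu \<le> - (\<alpha> / fst p) \<and> - (\<alpha> / fst p) \<le> - yl \<and> snd p = \<alpha> / fst p}"
  proof (cases "x = 0")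
    case True then show ?thesis using p a0 by auto
  next
    case False
    then show ?thesis using p divkey[OF False, of y \<alpha>] by (cases "0 < x") auto
  qed
qed

lemma Tneg:
  fixes xl xu yl yu \<alpha> :: real
  assumes a0: "\<alpha> < 0"
  shows "{(x, y). x * y = \<alpha> \<and> x \<in> {xl..xu} \<and> y \<in> {yl..yu}} =
    snd (apiece 1 (-1) (-\<alpha>) xl xu (-yu) (-yl)) \<union> snd (apiece (-1) 1 (-\<alpha>) (-xu) (-xl) yl yu)"
proof -
  have b0: "0 < -\<alpha>" using a0 by simp
  show ?thesis
    unfolding apiece_set[OF b0, of 1 "-1", simplified] apiece_set[OF b0, of "-1" 1, simplified]
    apply (rule set_eqI)
    subgoal for p
      apply (cases p)
      subgoal for x y
        by (cases "x = 0"; cases "0 < x") (use a0 divkey[of x y \<alpha>] in auto)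
      done
    done
qed

lemma Tzero:
  fixes xl xu yl yu :: real
  shows "{(x, y). x * y = 0 \<and> x \<in> {xl..xu} \<and> y \<in> {yl..yu}} =
    (if xl \<le> 0 \<and> 0 \<le> xu then (\<lambda>y. (0,y)) ` {yl..yu} else {}) \<union> (if yl \<le> 0 \<and> 0 \<le> yu then (\<lambda>x. (x,0)) ` {xl..xu} else {})"
  by (auto simp: image_iff)

theorem proposition12:
  fixes xl xu yl yu \<alpha> :: real
  assumes "xl < xu" and "yl < yu"
  shows "soc_representable
           (convex hull {(x, y). x * y = \<alpha> \<and> x \<in> {xl..xu} \<and> y \<in> {yl..yu}})"
proof (cases "0 < \<alpha>")
  case True
  show ?thesis unfolding Tpos[OF True]
    by (rule main; rule apiece_good) (use True in auto)
next
  case False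
  show ?thesis
  proof (cases "\<alpha> < 0")
    case True
    have b0: "0 < -\<alpha>" using True by simp
    show ?thesis unfolding Tneg[OF True]
      by (rule main; rule apiece_good) (use b0 in auto)
  next
    case False
    then have a: "\<alpha> = 0" using \<open>\<not> 0 < \<alpha>\<close> by simp
    have g1: "good_piece (if xl \<le> 0 \<and> 0 \<le> xu then segV yl yu else emptys) (if xl \<le> 0 \<and> 0 \<le> xu then (\<lambda>y. (0,y)) ` {yl..yu} else {})"
      using good_segV good_empty by simp
    have g2: "good_piece (if yl \<le> 0 \<and> 0 \<le> yu then segH xl xu else emptys) (if yl \<le> 0 \<and> 0 \<le> yu then (\<lambda>x. (x,0)) ` {xl..xu} else {})"
      using good_segH good_empty by simp
    show ?thesis unfolding a Tzero by (rule main[OF g1 g2])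
  qed
qed

end
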